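(* Let $n\geq 1$ be an integer, let $R$ be a commutative ring, let $\iota:\mu_n\to R^\times$ be an injective group homomorphism (extended by $\iota(0)=0$), and let $X\in R$ be an $\mathbb{S}[\mu_{n,+}]$-generator of $R$ with respect to $\iota$. Let $m$ be a positive integer. Then the class of $Y$ in the $R$-algebra $R[Y]/(Y^m-X)$ is an $\mathbb{S}[\mu_{n,+}]$-generator of $R[Y]/(Y^m-X)$, with respect to the composite of $\iota$ with the canonical map $R\to R[Y]/(Y^m-X)$.
   Context: $\mu_n$ denotes the multiplicative group of $n$-th roots of unity and $\mu_{n,+}=\mu_n\cup\{0\}$. Given a ring $A$ and an injective group homomorphism $\iota:\mu_n\to A^\times$ (with $\iota(0):=0$), an element $X\in A$ is called an $\mathbb{S}[\mu_{n,+}]$-generator of $A$ if every $z\in A$ can be written uniquely as a finite sum $z=\sum_{j\ge 0}\iota(\alpha_j)X^j$ with coefficients $\alpha_j\in\mu_n\cup\{0\}$, only finitely many nonzero. *)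

theory Defs
  imports Complex_Main "HOL-Algebra.Algebra"
begin

definition mu :: "nat \<Rightarrow> complex set" where
  "mu n = {z. z ^ n = 1}"

definition mu_plus :: "nat \<Rightarrow> complex set" where
  "mu_plus n = insert 0 (mu n)"

definition mu_embedding :: "('a, 'b) ring_scheme \<Rightarrow> nat \<Rightarrow> (complex \<Rightarrow> 'a) \<Rightarrow> bool" where
  "mu_embedding A n iota \<longleftrightarrow>
     (\<forall>x\<in>mu n. iota x \<in> Units A) \<and>
     (\<forall>x\<in>mu n. \<forall>y\<in>mu n. iota (x * y) = iota x \<otimes>\<^bsub>A\<^esub> iota y) \<and>
     inj_on iota (mu n) \<and>
     iota 0 = \<zero>\<^bsub>A\<^esub>"

definition S_generator :: "('a, 'b) ring_scheme \<Rightarrow> nat \<Rightarrow> (complex \<Rightarrow> 'a) \<Rightarrow> 'a \<Rightarrow> bool" where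
  "S_generator A n iota x \<longleftrightarrow> x \<in> carrier A \<and>
     (\<forall>z\<in>carrier A. \<exists>!\<alpha> :: nat \<Rightarrow> complex.
        (\<forall>j. \<alpha> j \<in> mu_plus n) \<and> finite {j. \<alpha> j \<noteq> 0} \<and>
        z = finsum A (\<lambda>j. iota (\<alpha> j) \<otimes>\<^bsub>A\<^esub> pow A x j) {j. \<alpha> j \<noteq> 0})"

definition root_ideal :: "('a, 'b) ring_scheme \<Rightarrow> nat \<Rightarrow> 'a \<Rightarrow> (nat \<Rightarrow> 'a) set" where
  "root_ideal R m x =
     PIdl\<^bsub>UP R\<^esub> (monom (UP R) \<one>\<^bsub>R\<^esub> m \<ominus>\<^bsub>UP R\<^esub> monom (UP R) x 0)"

definition root_ext :: "('a, 'b) ring_scheme \<Rightarrow> nat \<Rightarrow> 'a \<Rightarrow> (nat \<Rightarrow> 'a) set ring" where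
  "root_ext R m x = UP R Quot root_ideal R m x"

definition root_ext_map :: "('a, 'b) ring_scheme \<Rightarrow> nat \<Rightarrow> 'a \<Rightarrow> 'a \<Rightarrow> (nat \<Rightarrow> 'a) set" where
  "root_ext_map R m x a = root_ideal R m x +>\<^bsub>UP R\<^esub> monom (UP R) a 0"

definition root_ext_Y :: "('a, 'b) ring_scheme \<Rightarrow> nat \<Rightarrow> 'a \<Rightarrow> (nat \<Rightarrow> 'a) set" where
  "root_ext_Y R m x = root_ideal R m x +>\<^bsub>UP R\<^esub> monom (UP R) \<one>\<^bsub>R\<^esub> 1"

end

theory Submission imports Defs begin
locale rx = UP_cring +
  fixes n m :: nat and iota :: "complex \<Rightarrow> 'a" and x :: 'a
  assumes m1: "1 \<le> m" and emb: "mu_embedding R n iota" and gen: "S_generator R n iota x"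
begin
definition "f = up_ring.monom P \<one> m \<ominus>\<^bsub>P\<^esub> up_ring.monom P x 0"
definition "I = PIdl\<^bsub>P\<^esub> f"
definition "Q = P Quot I"
definition "proj = a_r_coset P I"
definition "adm (\<alpha> :: nat \<Rightarrow> complex) \<longleftrightarrow> (\<forall>j. \<alpha> j \<in> mu_plus n) \<and> finite {j. \<alpha> j \<noteq> 0}"
definition "ia (\<alpha> :: nat \<Rightarrow> complex) = (\<lambda>k. iota (\<alpha> k))"
definition "psi r N p = (\<Oplus>q\<in>{..<N}. up_ring.coeff P p (m*q+r) \<otimes> x [^] q)"
definition "red N p = (\<lambda>k. if k < m then psi k N p else \<zero>)"

lemma x_closed[simp]: "x \<in> carrier R" using gen by (simp add: S_generator_def)
lemma iota0[simp]: "iota 0 = \<zero>" using emb by (simp add: mu_embedding_def)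
lemma iota_closed: "z \<in> mu_plus n \<Longrightarrow> iota z \<in> carrier R"
  using emb by (auto simp: mu_embedding_def mu_plus_def Units_def)
lemma adm_closed: "adm \<alpha> \<Longrightarrow> iota (\<alpha> j) \<in> carrier R"
  unfolding adm_def using iota_closed by blast

lemma f_closed[simp]: "f \<in> carrier P" by (simp add: f_def)
lemma I_ideal: "ideal I P" unfolding I_def by (rule P.cgenideal_ideal[OF f_closed])
lemma f_in_I: "f \<in> I" unfolding I_def by (rule P.cgenideal_self[OF f_closed])
lemma hom: "ring_hom_cring P Q proj"
  unfolding Q_def proj_def by (rule ideal.rcos_ring_hom_cring[OF I_ideal P.is_cring])

lemma carrier_P: "carrier P = up R" by (simp add: P_def UP_def)
lemma coeff_eq: assumes "p \<in> carrier P" shows "up_ring.coeff P p k = p k"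
proof -
  have "p \<in> up R" using assms by (simp only: carrier_P)
  then show ?thesis unfolding P_def UP_def by simp
qed

lemma ia_closed: assumes "adm \<alpha>" shows "ia \<alpha> \<in> carrier P"
proof -
  from assms obtain N where N: "{j. \<alpha> j \<noteq> 0} \<subseteq> {..<N}"
    unfolding adm_def using finite_nat_bounded by blast
  have "ia \<alpha> \<in> up R"
  proof (rule mem_upI)
    show "\<And>k. ia \<alpha> k \<in> carrier R" using adm_closed[OF assms] by (simp add: ia_def)
    have "bound \<zero> N (ia \<alpha>)" unfolding bound_def ia_def
    proof (intro allI impI)
      fix k assume "N < k" have "\<alpha> k \<noteq> 0 \<Longrightarrow> k \<in> {..<N}" using N by blast
      then have "\<alpha> k = 0" using \<open>N < k\<close> by fastforce
      then show "iota (\<alpha> k) = \<zero>" by simp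
    qed
    then show "\<exists>n. bound \<zero> n (ia \<alpha>)" by blast
  qed
  then show ?thesis by (simp add: carrier_P)
qed

lemma psi_closed: "p \<in> carrier P \<Longrightarrow> psi r N p \<in> carrier R"
  unfolding psi_def by (intro R.finsum_closed) (auto simp: Pi_def)

lemma red_closed: assumes "p \<in> carrier P" shows "red N p \<in> carrier P"
proof -
  have "red N p \<in> up R"
  proof (rule mem_upI)
    show "\<And>k. red N p k \<in> carrier R" using psi_closed[OF assms] by (simp add: red_def)
    have "bound \<zero> m (red N p)" unfolding bound_def red_def by force
    then show "\<exists>n. bound \<zero> n (red N p)" by blast
  qed
  then show ?thesis by (simp add: carrier_P)
qed

lemma coeff_red: "p \<in> carrier P \<Longrightarrow> up_ring.coeff P (red N p) k = (if k < m then psi k N p else \<zero>)"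
  using red_closed coeff_eq red_def by simp

lemma psi_add: assumes "p \<in> carrier P" "q \<in> carrier P"
  shows "psi r N (p \<oplus>\<^bsub>P\<^esub> q) = psi r N p \<oplus> psi r N q"
proof -
  have "psi r N (p \<oplus>\<^bsub>P\<^esub> q) = (\<Oplus>i\<in>{..<N}. up_ring.coeff P p (m*i+r) \<otimes> x [^] i \<oplus> up_ring.coeff P q (m*i+r) \<otimes> x [^] i)"
    unfolding psi_def
    by (rule R.finsum_cong') (auto simp: assms R.l_distr)
  also have "\<dots> = psi r N p \<oplus> psi r N q"
    unfolding psi_def by (rule R.finsum_addf) (auto simp: assms)
  finally show ?thesis .
qed

lemma red_add: assumes "p \<in> carrier P" "q \<in> carrier P"
  shows "red N (p \<oplus>\<^bsub>P\<^esub> q) = red N p \<oplus>\<^bsub>P\<^esub> red N q"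
proof (rule up_eqI)
  fix k show "up_ring.coeff P (red N (p \<oplus>\<^bsub>P\<^esub> q)) k = up_ring.coeff P (red N p \<oplus>\<^bsub>P\<^esub> red N q) k"
  proof -
    have pq: "p \<oplus>\<^bsub>P\<^esub> q \<in> carrier P" using assms by (rule P.a_closed)
    have 1: "up_ring.coeff P (red N (p \<oplus>\<^bsub>P\<^esub> q)) k = (if k<m then psi k N (p \<oplus>\<^bsub>P\<^esub> q) else \<zero>)"
      by (rule coeff_red[OF pq])
    have 2: "up_ring.coeff P (red N p \<oplus>\<^bsub>P\<^esub> red N q) k = up_ring.coeff P (red N p) k \<oplus> up_ring.coeff P (red N q) k"
      by (rule coeff_add[OF red_closed[OF assms(1)] red_closed[OF assms(2)]])
    show ?thesis unfolding 1 2 coeff_red[OF assms(1)] coeff_red[OF assms(2)] psi_add[OF assms]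
      using R.l_zero[OF R.zero_closed] by (cases "k<m") (simp_all only: if_True if_False)
  qed
qed (use assms in \<open>simp_all add: red_closed\<close>)

lemma red_zero: "red N \<zero>\<^bsub>P\<^esub> = \<zero>\<^bsub>P\<^esub>"
proof (rule up_eqI)
  fix k show "up_ring.coeff P (red N \<zero>\<^bsub>P\<^esub>) k = up_ring.coeff P \<zero>\<^bsub>P\<^esub> k"
    by (simp only: coeff_red coeff_zero P.zero_closed psi_def R.l_null R.nat_pow_closed x_closed R.finsum_zero if_cancel)
qed (simp_all add: red_closed)


lemma red_finsum: fixes d :: nat assumes "g \<in> {..d} \<rightarrow> carrier P"
  shows "red N (finsum P g {..d}) = finsum P (\<lambda>i. red N (g i)) {..d}"
  using assms
proof (induction d)
  case 0
  have g0: "g 0 \<in> carrier P" using 0 by auto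
  have "finsum P g {..0} = g 0" by (rule P.finsum_0) (use g0 in auto)
  moreover have "finsum P (\<lambda>i. red N (g i)) {..0} = red N (g 0)"
    by (rule P.finsum_0) (use g0 red_closed in auto)
  ultimately show ?case by simp
next
  case (Suc d)
  have g: "g \<in> {..d} \<rightarrow> carrier P" using Suc.prems by auto
  have gs: "g (Suc d) \<in> carrier P" using Suc.prems by auto
  have "finsum P g {..Suc d} = g (Suc d) \<oplus>\<^bsub>P\<^esub> finsum P g {..d}"
    by (rule P.finsum_Suc) (rule Suc.prems)
  moreover have "finsum P (\<lambda>i. red N (g i)) {..Suc d} = red N (g (Suc d)) \<oplus>\<^bsub>P\<^esub> finsum P (\<lambda>i. red N (g i)) {..d}"
    by (rule P.finsum_Suc) (use Suc.prems red_closed in auto)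
  moreover have "finsum P g {..d} \<in> carrier P" by (rule P.finsum_closed[OF g])
  ultimately show ?case using red_add gs Suc.IH[OF g] by simp
qed

lemma divmod_iff: assumes "j < m" shows "(k = m*q+j) \<longleftrightarrow> (q = k div m \<and> j = k mod m)"
proof
  assume "k = m*q+j" then show "q = k div m \<and> j = k mod m" using assms by simp
next
  assume "q = k div m \<and> j = k mod m" then show "k = m*q+j" by simp
qed

lemma red_monom: assumes c: "c \<in> carrier R" and k: "k < N"
  shows "red N (up_ring.monom P c k) = up_ring.monom P (c \<otimes> x [^] (k div m)) (k mod m)"
proof (rule up_eqI)
  fix j
  have kd: "k div m < N" using k div_le_dividend[of k m] by linarith
  have cx: "c \<otimes> x [^] (k div m) \<in> carrier R" using c by simp
  have mc: "up_ring.monom P c k \<in> carrier P" using c by simp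
  have rhs: "up_ring.coeff P (up_ring.monom P (c \<otimes> x [^] (k div m)) (k mod m)) j =
     (if k mod m = j then c \<otimes> x [^] (k div m) else \<zero>)" by (rule coeff_monom[OF cx])
  have psi: "psi j N (up_ring.monom P c k) = (\<Oplus>q\<in>{..<N}. (if k = m*q+j then c else \<zero>) \<otimes> x [^] q)"
    unfolding psi_def by (rule R.finsum_cong') (auto simp: coeff_monom[OF c] c)
  show "up_ring.coeff P (red N (up_ring.monom P c k)) j = up_ring.coeff P (up_ring.monom P (c \<otimes> x [^] (k div m)) (k mod m)) j"
  proof (cases "j < m")
    case False
    have "k mod m < m" using m1 by simp
    then have "k mod m \<noteq> j" using False by simp
    then show ?thesis unfolding rhs coeff_red[OF mc] using False by simp
  next
    case True
    show ?thesis
    proof (cases "k mod m = j")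
      case True2: True
      have "(\<Oplus>q\<in>{..<N}. (if k = m*q+j then c else \<zero>) \<otimes> x [^] q) = (\<Oplus>q\<in>{..<N}. (if k div m = q then c \<otimes> x [^] q else \<zero>))"
        by (rule R.finsum_cong') (use c divmod_iff[OF True] True2 in auto)
      also have "\<dots> = c \<otimes> x [^] (k div m)"
        by (rule R.finsum_singleton) (use c kd in \<open>auto\<close>)
      finally show ?thesis unfolding rhs coeff_red[OF mc] psi using True True2 by simp
    next
      case False2: False
      have "(\<Oplus>q\<in>{..<N}. (if k = m*q+j then c else \<zero>) \<otimes> x [^] q) = (\<Oplus>q\<in>{..<N}. \<zero>)"
        by (rule R.finsum_cong') (use c divmod_iff[OF True] False2 in auto)
      also have "\<dots> = \<zero>" by (rule R.finsum_zero)
      finally show ?thesis unfolding rhs coeff_red[OF mc] psi using True False2 by simp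
    qed
  qed
qed (use assms red_closed in auto)

lemma proj_eq: assumes "a \<in> carrier P" "b \<in> carrier P"
  shows "proj a = proj b \<longleftrightarrow> a \<ominus>\<^bsub>P\<^esub> b \<in> I"
  unfolding proj_def using P.quotient_eq_iff_same_a_r_cos[OF I_ideal assms] by simp

lemma proj_monom: assumes c: "c \<in> carrier R"
  shows "proj (up_ring.monom P c k) = proj (up_ring.monom P (c \<otimes> x [^] (k div m)) (k mod m))"
proof -
  interpret H: ring_hom_cring P Q proj by (rule hom)
  define q where "q = k div m"
  define r where "r = k mod m"
  have k: "k = r + m * q" unfolding q_def r_def by simp
  have 1: "proj (up_ring.monom P \<one> m) = proj (up_ring.monom P x 0)"
    using proj_eq f_in_I unfolding f_def by simp
  have "up_ring.monom P c k = up_ring.monom P (c \<otimes> \<one>) (r + m * q)" using c k by simp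
  also have "\<dots> = up_ring.monom P c r \<otimes>\<^bsub>P\<^esub> up_ring.monom P \<one> (m * q)"
    by (rule monom_mult) (use c in auto)
  also have "up_ring.monom P \<one> (m * q) = up_ring.monom P \<one> m [^]\<^bsub>P\<^esub> q"
    using monom_pow[of \<one> m q] by simp
  finally have "proj (up_ring.monom P c k) = proj (up_ring.monom P c r) \<otimes>\<^bsub>Q\<^esub> proj (up_ring.monom P \<one> m) [^]\<^bsub>Q\<^esub> q"
    using c by simp
  also have "\<dots> = proj (up_ring.monom P c r) \<otimes>\<^bsub>Q\<^esub> proj (up_ring.monom P x 0) [^]\<^bsub>Q\<^esub> q"
    using 1 by simp
  also have "\<dots> = proj (up_ring.monom P c r \<otimes>\<^bsub>P\<^esub> up_ring.monom P x 0 [^]\<^bsub>P\<^esub> q)"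
    using c by simp
  also have "up_ring.monom P x 0 [^]\<^bsub>P\<^esub> q = up_ring.monom P (x [^] q) 0"
    using monom_pow[of x 0 q] by simp
  also have "up_ring.monom P c r \<otimes>\<^bsub>P\<^esub> up_ring.monom P (x [^] q) 0 = up_ring.monom P (c \<otimes> x [^] q) (r + 0)"
    by (rule monom_mult[symmetric]) (use c in auto)
  finally show ?thesis unfolding q_def r_def by simp
qed


lemma reduce: assumes p: "p \<in> carrier P" and d: "deg R p < N"
  shows "proj p = proj (red N p)"
proof -
  interpret H: ring_hom_cring P Q proj by (rule hom)
  define g where "g = (\<lambda>i. up_ring.monom P (up_ring.coeff P p i) i)"
  have g: "g \<in> {..deg R p} \<rightarrow> carrier P" unfolding g_def using p by auto
  have rg: "(\<lambda>i. red N (g i)) \<in> {..deg R p} \<rightarrow> carrier P" using g red_closed by auto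
  have pe: "p = finsum P g {..deg R p}" unfolding g_def using up_repr[OF p] by simp
  have "proj p = finsum Q (proj \<circ> g) {..deg R p}"
    using H.hom_finsum[OF g] pe by (simp add: o_def)
  also have "\<dots> = finsum Q (proj \<circ> (\<lambda>i. red N (g i))) {..deg R p}"
  proof (rule H.S.finsum_cong')
    show "proj \<circ> (\<lambda>i. red N (g i)) \<in> {..deg R p} \<rightarrow> carrier Q" using rg H.hom_closed by (auto simp: Pi_def)
    fix i assume i: "i \<in> {..deg R p}"
    have c: "up_ring.coeff P p i \<in> carrier R" using p by simp
    have iN: "i < N" using i d by simp
    show "(proj \<circ> g) i = (proj \<circ> (\<lambda>i. red N (g i))) i"
      unfolding g_def o_def red_monom[OF c iN] by (rule proj_monom[OF c])
  qed simp
  also have "\<dots> = proj (finsum P (\<lambda>i. red N (g i)) {..deg R p})"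
    using H.hom_finsum[OF rg] by (simp add: o_def)
  also have "\<dots> = proj (red N p)"
    using red_finsum[OF g] pe by simp
  finally show ?thesis .
qed

lemma ideal_small: assumes gI: "g \<in> I" and z: "\<And>k. m \<le> k \<Longrightarrow> up_ring.coeff P g k = \<zero>"
  shows "g = \<zero>\<^bsub>P\<^esub>"
proof -
  obtain q where q: "q \<in> carrier P" and gq: "g = q \<otimes>\<^bsub>P\<^esub> f"
    using gI unfolding I_def cgenideal_def by blast
  show ?thesis
  proof (cases "q = \<zero>\<^bsub>P\<^esub>")
    case True then show ?thesis using gq by simp
  next
    case False
    define d where "d = deg R q"
    have m1': "up_ring.monom P \<one> m \<in> carrier P" "up_ring.monom P x 0 \<in> carrier P" by simp_all
    have "g = up_ring.monom P \<one> m \<otimes>\<^bsub>P\<^esub> q \<ominus>\<^bsub>P\<^esub> up_ring.monom P x 0 \<otimes>\<^bsub>P\<^esub> q"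
      unfolding gq f_def using q m1' by (simp add: a_minus_def P.r_distr P.r_minus P.m_comm)
    then have "up_ring.coeff P g (d + m) = up_ring.coeff P (up_ring.monom P \<one> m \<otimes>\<^bsub>P\<^esub> q) (d + m) \<ominus> up_ring.coeff P (x \<odot>\<^bsub>P\<^esub> q) (d + m)"
      using q m1' monom_mult_is_smult[OF x_closed q] by simp
    also have "\<dots> = \<one> \<otimes> up_ring.coeff P q d \<ominus> x \<otimes> up_ring.coeff P q (d + m)"
      using coeff_monom_mult[OF R.one_closed q, of m d] q by simp
    also have "up_ring.coeff P q (d + m) = \<zero>"
      by (rule deg_aboveD) (use m1 q d_def in auto)
    finally have "up_ring.coeff P g (d + m) = up_ring.coeff P q d" using q by (simp add: a_minus_def)
    moreover have "up_ring.coeff P q d \<noteq> \<zero>" unfolding d_def by (rule lcoeff_nonzero2[OF q False])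
    moreover have "up_ring.coeff P g (d + m) = \<zero>" by (rule z) simp
    ultimately show ?thesis by simp
  qed
qed

lemma psi_ia: assumes a: "adm \<alpha>" and N: "\<And>k. N \<le> k \<Longrightarrow> \<alpha> k = 0"
  shows "psi r N (ia \<alpha>) = (\<Oplus>j\<in>{j. \<alpha> (m*j+r) \<noteq> 0}. iota (\<alpha> (m*j+r)) \<otimes> x [^] j)"
proof -
  have sub: "{j. \<alpha> (m*j+r) \<noteq> 0} \<subseteq> {..<N}"
  proof
    fix j assume "j \<in> {j. \<alpha> (m*j+r) \<noteq> 0}"
    then have "\<not> N \<le> m*j+r" using N by auto
    moreover have "j \<le> m*j+r" using m1 by (metis le_add1 le_trans mult_le_mono1 mult_1)
    ultimately show "j \<in> {..<N}" by simp
  qed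
  have "psi r N (ia \<alpha>) = (\<Oplus>j\<in>{..<N}. iota (\<alpha> (m*j+r)) \<otimes> x [^] j)"
    unfolding psi_def by (rule R.finsum_cong') (use coeff_eq[OF ia_closed[OF a]] adm_closed[OF a] in \<open>auto simp: ia_def\<close>)
  also have "\<dots> = (\<Oplus>j\<in>{j. \<alpha> (m*j+r) \<noteq> 0}. iota (\<alpha> (m*j+r)) \<otimes> x [^] j)"
    by (rule R.add.finprod_mono_neutral_cong_left[symmetric]) (use sub adm_closed[OF a] in auto)
  finally show ?thesis .
qed

lemma psi_ext: assumes p: "p \<in> carrier P" and d: "deg R p < N0" and N: "N0 \<le> N"
  shows "psi r N p = psi r N0 p"
proof -
  have z: "up_ring.coeff P p (m*i+r) \<otimes> x [^] i = \<zero>" if "i \<in> {..<N} - {..<N0}" for i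
  proof -
    from that have i: "N0 \<le> i" by simp
    have "i \<le> m*i+r" using m1 by (metis le_add1 le_trans mult_le_mono1 mult_1)
    then have "deg R p < m*i+r" using d i by linarith
    then show ?thesis using deg_aboveD[OF _ p] by simp
  qed
  show ?thesis unfolding psi_def
    by (rule R.add.finprod_mono_neutral_cong_left[symmetric]) (use z p N in auto)
qed

lemma sum_Q: assumes a: "adm \<alpha>"
  shows "finsum Q (\<lambda>j. proj (up_ring.monom P (iota (\<alpha> j)) 0) \<otimes>\<^bsub>Q\<^esub> proj (up_ring.monom P \<one> 1) [^]\<^bsub>Q\<^esub> j) {j. \<alpha> j \<noteq> 0}
     = proj (ia \<alpha>)"
proof -
  interpret H: ring_hom_cring P Q proj by (rule hom)
  define S where "S = {j. \<alpha> j \<noteq> 0}"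
  have fin: "finite S" using a unfolding adm_def S_def by simp
  have g: "(\<lambda>j. up_ring.monom P (iota (\<alpha> j)) j) \<in> S \<rightarrow> carrier P" using adm_closed[OF a] by simp
  have "finsum Q (\<lambda>j. proj (up_ring.monom P (iota (\<alpha> j)) 0) \<otimes>\<^bsub>Q\<^esub> proj (up_ring.monom P \<one> 1) [^]\<^bsub>Q\<^esub> j) S
      = finsum Q (proj \<circ> (\<lambda>j. up_ring.monom P (iota (\<alpha> j)) j)) S"
  proof (rule H.S.finsum_cong')
    fix j assume "j \<in> S"
    have c: "iota (\<alpha> j) \<in> carrier R" by (rule adm_closed[OF a])
    have "up_ring.monom P (iota (\<alpha> j)) j = up_ring.monom P (iota (\<alpha> j) \<otimes> \<one> [^] j) (0 + 1 * j)" using c by simp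
    also have "\<dots> = up_ring.monom P (iota (\<alpha> j)) 0 \<otimes>\<^bsub>P\<^esub> up_ring.monom P (\<one> [^] j) (1 * j)"
      by (rule monom_mult) (use c in auto)
    also have "up_ring.monom P (\<one> [^] j) (1 * j) = up_ring.monom P \<one> 1 [^]\<^bsub>P\<^esub> j"
      using monom_pow[of \<one> 1 j] by simp
    finally show "proj (up_ring.monom P (iota (\<alpha> j)) 0) \<otimes>\<^bsub>Q\<^esub> proj (up_ring.monom P \<one> 1) [^]\<^bsub>Q\<^esub> j = (proj \<circ> (\<lambda>j. up_ring.monom P (iota (\<alpha> j)) j)) j"
      using c by simp
  qed (use g H.hom_closed in \<open>auto simp: Pi_def\<close>)
  also have "\<dots> = proj (finsum P (\<lambda>j. up_ring.monom P (iota (\<alpha> j)) j) S)"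
    using H.hom_finsum[OF g] by (simp add: o_def)
  also have "finsum P (\<lambda>j. up_ring.monom P (iota (\<alpha> j)) j) S = ia \<alpha>"
  proof (rule up_eqI)
    fix k
    have "up_ring.coeff P (finsum P (\<lambda>j. up_ring.monom P (iota (\<alpha> j)) j) S) k = (\<Oplus>j\<in>S. up_ring.coeff P (up_ring.monom P (iota (\<alpha> j)) j) k)"
      by (rule coeff_finsum[OF fin g])
    also have "\<dots> = (\<Oplus>j\<in>S. if k = j then iota (\<alpha> j) else \<zero>)"
      by (rule R.finsum_cong') (use adm_closed[OF a] in auto)
    also have "\<dots> = iota (\<alpha> k)"
    proof (cases "k \<in> S")
      case True then show ?thesis by (intro R.finsum_singleton) (use fin adm_closed[OF a] in auto)
    next
      case False
      then have "(\<Oplus>j\<in>S. if k = j then iota (\<alpha> j) else \<zero>) = (\<Oplus>j\<in>S. \<zero>)"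
        by (intro R.finsum_cong') auto
      then show ?thesis using False unfolding S_def by simp
    qed
    finally show "up_ring.coeff P (finsum P (\<lambda>j. up_ring.monom P (iota (\<alpha> j)) j) S) k = up_ring.coeff P (ia \<alpha>) k"
      using coeff_eq[OF ia_closed[OF a]] by (simp add: ia_def)
  qed (use g ia_closed[OF a] in auto)
  finally show ?thesis unfolding S_def .
qed

lemma mi_le: "i \<le> m*i+r" using m1 by (metis le_add1 le_trans mult_le_mono1 mult_1)

lemma deg_ia: assumes a: "adm \<alpha>" and N: "\<And>k. N \<le> k \<Longrightarrow> \<alpha> k = 0" and N0: "0 < N"
  shows "deg R (ia \<alpha>) < N"
proof -
  have "deg R (ia \<alpha>) \<le> N - 1"
  proof (rule deg_aboveI)
    fix k assume "N - 1 < k"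
    then have "N \<le> k" by simp
    then show "up_ring.coeff P (ia \<alpha>) k = \<zero>"
      using coeff_eq[OF ia_closed[OF a]] N by (simp add: ia_def)
  qed (rule ia_closed[OF a])
  then show ?thesis using N0 by linarith
qed

lemma ex1_uniq: "\<exists>!y. Phi y \<Longrightarrow> Phi a \<Longrightarrow> Phi b \<Longrightarrow> a = b" by blast

lemma gen_uniq: assumes "z \<in> carrier R"
  and "adm \<beta>" "z = (\<Oplus>j\<in>{j. \<beta> j \<noteq> 0}. iota (\<beta> j) \<otimes> x [^] j)"
  and "adm \<gamma>" "z = (\<Oplus>j\<in>{j. \<gamma> j \<noteq> 0}. iota (\<gamma> j) \<otimes> x [^] j)"
  shows "\<beta> = \<gamma>"
proof -
  have u: "\<exists>!\<alpha> :: nat \<Rightarrow> complex. (\<forall>j. \<alpha> j \<in> mu_plus n) \<and> finite {j. \<alpha> j \<noteq> 0} \<and>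
        z = (\<Oplus>j\<in>{j. \<alpha> j \<noteq> 0}. iota (\<alpha> j) \<otimes> x [^] j)"
    by (rule bspec[OF conjunct2[OF gen[unfolded S_generator_def]] assms(1)])
  have hb: "(\<forall>j. \<beta> j \<in> mu_plus n) \<and> finite {j. \<beta> j \<noteq> 0} \<and> z = (\<Oplus>j\<in>{j. \<beta> j \<noteq> 0}. iota (\<beta> j) \<otimes> x [^] j)"
    using assms(2,3) unfolding adm_def by simp
  have hg: "(\<forall>j. \<gamma> j \<in> mu_plus n) \<and> finite {j. \<gamma> j \<noteq> 0} \<and> z = (\<Oplus>j\<in>{j. \<gamma> j \<noteq> 0}. iota (\<gamma> j) \<otimes> x [^] j)"
    using assms(4,5) unfolding adm_def by simp
  from u show ?thesis
  proof (rule ex1E)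
    fix a :: "nat \<Rightarrow> complex" assume H: "\<forall>y. ((\<forall>j. y j \<in> mu_plus n) \<and> finite {j. y j \<noteq> 0} \<and> z = (\<Oplus>j\<in>{j. y j \<noteq> 0}. iota (y j) \<otimes> x [^] j)) \<longrightarrow> y = a"
    have "\<beta> = a" by (rule mp[OF spec[OF H] hb])
    moreover have "\<gamma> = a" by (rule mp[OF spec[OF H] hg])
    ultimately show ?thesis by simp
  qed
qed

lemma gen_ex: assumes "z \<in> carrier R"
  shows "\<exists>\<beta>. adm \<beta> \<and> z = (\<Oplus>j\<in>{j. \<beta> j \<noteq> 0}. iota (\<beta> j) \<otimes> x [^] j)"
proof -
  have "\<exists>!\<alpha> :: nat \<Rightarrow> complex. (\<forall>j. \<alpha> j \<in> mu_plus n) \<and> finite {j. \<alpha> j \<noteq> 0} \<and>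
        z = (\<Oplus>j\<in>{j. \<alpha> j \<noteq> 0}. iota (\<alpha> j) \<otimes> x [^] j)"
    by (rule bspec[OF conjunct2[OF gen[unfolded S_generator_def]] assms(1)])
  then obtain \<beta> :: "nat \<Rightarrow> complex" where "(\<forall>j. \<beta> j \<in> mu_plus n) \<and> finite {j. \<beta> j \<noteq> 0} \<and> z = (\<Oplus>j\<in>{j. \<beta> j \<noteq> 0}. iota (\<beta> j) \<otimes> x [^] j)"
    by (rule ex1E) (rule that)
  then show ?thesis unfolding adm_def by blast
qed

lemma exist: assumes p: "p \<in> carrier P" shows "\<exists>\<alpha>. adm \<alpha> \<and> proj p = proj (ia \<alpha>)"
proof -
  define N0 where "N0 = Suc (deg R p)"
  have "\<forall>r. \<exists>\<beta>. adm \<beta> \<and> psi r N0 p = (\<Oplus>j\<in>{j. \<beta> j \<noteq> 0}. iota (\<beta> j) \<otimes> x [^] j)"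
    using gen_ex psi_closed[OF p] by blast
  then obtain \<beta> where \<beta>: "\<And>r. adm (\<beta> r) \<and> psi r N0 p = (\<Oplus>j\<in>{j. \<beta> r j \<noteq> 0}. iota (\<beta> r j) \<otimes> x [^] j)"
    by metis
  have "finite (\<Union>r<m. {j. \<beta> r j \<noteq> 0})" using \<beta> unfolding adm_def by blast
  then obtain N1 where N1: "(\<Union>r<m. {j. \<beta> r j \<noteq> 0}) \<subseteq> {..<N1}" using finite_nat_bounded by blast
  define N where "N = m * (N0 + N1)"
  define \<alpha> where "\<alpha> k = \<beta> (k mod m) (k div m)" for k
  have m0: "0 < m" using m1 by simp
  have kdiv: "k div m < N1" if "\<alpha> k \<noteq> 0" for k
  proof -
    have "k mod m < m" using m0 by simp
    then have "k div m \<in> (\<Union>r<m. {j. \<beta> r j \<noteq> 0})" using that unfolding \<alpha>_def by blast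
    then show ?thesis using N1 by blast
  qed
  have Nz: "\<alpha> k = 0" if "N \<le> k" for k
  proof (rule ccontr)
    assume "\<alpha> k \<noteq> 0"
    then have "k div m < N1" by (rule kdiv)
    moreover have "N div m \<le> k div m" using that by (rule div_le_mono)
    moreover have "N div m = N0 + N1" unfolding N_def using m0 by simp
    ultimately show False by simp
  qed
  have adm: "adm \<alpha>"
    unfolding adm_def
  proof
    show "\<forall>j. \<alpha> j \<in> mu_plus n"
    proof
      fix j
      have "adm (\<beta> (j mod m))" using \<beta> by simp
      then show "\<alpha> j \<in> mu_plus n" unfolding adm_def \<alpha>_def by simp
    qed
    have "{j. \<alpha> j \<noteq> 0} \<subseteq> {..<N}"
    proof
      fix j assume "j \<in> {j. \<alpha> j \<noteq> 0}"
      then have "\<not> N \<le> j" using Nz by blast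
      then show "j \<in> {..<N}" by simp
    qed
    then show "finite {j. \<alpha> j \<noteq> 0}" using finite_subset by blast
  qed
  have N0N: "N0 \<le> N" unfolding N_def using m1 by (metis le_add1 le_trans mult_le_mono1 mult_1)
  have dp: "deg R p < N0" unfolding N0_def by simp
  have dpN: "deg R p < N" using dp N0N by simp
  have Npos: "0 < N" using dpN by (cases N) auto
  have da: "deg R (ia \<alpha>) < N" by (rule deg_ia[OF adm Nz Npos])
  have red_eq: "red N p = red N (ia \<alpha>)"
  proof (rule up_eqI)
    fix j
    show "up_ring.coeff P (red N p) j = up_ring.coeff P (red N (ia \<alpha>)) j"
    proof (cases "j < m")
      case True
      have ab2: "\<beta> j i = \<alpha> (m*i+j)" for i unfolding \<alpha>_def using True by simp
      have "psi j N p = psi j N0 p" by (rule psi_ext[OF p dp N0N])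
      also have "\<dots> = (\<Oplus>i\<in>{i. \<beta> j i \<noteq> 0}. iota (\<beta> j i) \<otimes> x [^] i)" using \<beta>[of j] by (rule conjunct2)
      also have "\<dots> = (\<Oplus>i\<in>{i. \<alpha> (m*i+j) \<noteq> 0}. iota (\<alpha> (m*i+j)) \<otimes> x [^] i)"
        by (simp only: ab2)
      also have "\<dots> = psi j N (ia \<alpha>)" by (rule psi_ia[OF adm Nz, symmetric])
      finally show ?thesis using coeff_red[OF p] coeff_red[OF ia_closed[OF adm]] True by simp
    next
      case False
      then show ?thesis using coeff_red[OF p] coeff_red[OF ia_closed[OF adm]] by simp
    qed
  qed (use red_closed p ia_closed[OF adm] in auto)
  have "proj p = proj (red N p)" by (rule reduce[OF p dpN])
  also have "\<dots> = proj (red N (ia \<alpha>))" using red_eq by simp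
  also have "\<dots> = proj (ia \<alpha>)" by (rule reduce[OF ia_closed[OF adm] da, symmetric])
  finally show ?thesis using adm by blast
qed

lemma uniq: assumes a: "adm \<alpha>" and b: "adm \<gamma>" and e: "proj (ia \<alpha>) = proj (ia \<gamma>)"
  shows "\<alpha> = \<gamma>"
proof -
  have "finite ({j. \<alpha> j \<noteq> 0} \<union> {j. \<gamma> j \<noteq> 0})" using a b unfolding adm_def by simp
  then obtain N' where N': "{j. \<alpha> j \<noteq> 0} \<union> {j. \<gamma> j \<noteq> 0} \<subseteq> {..<N'}" using finite_nat_bounded by blast
  define N where "N = Suc N'"
  have Na: "\<alpha> k = 0" if "N \<le> k" for k
  proof (rule ccontr)
    assume "\<alpha> k \<noteq> 0" then have "k \<in> {..<N'}" using N' by blast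
    then show False using that unfolding N_def by simp
  qed
  have Nb: "\<gamma> k = 0" if "N \<le> k" for k
  proof (rule ccontr)
    assume "\<gamma> k \<noteq> 0" then have "k \<in> {..<N'}" using N' by blast
    then show False using that unfolding N_def by simp
  qed
  have ia: "ia \<alpha> \<in> carrier P" "ia \<gamma> \<in> carrier P" using ia_closed a b by auto
  have ra: "red N (ia \<alpha>) \<in> carrier P" "red N (ia \<gamma>) \<in> carrier P" using red_closed ia by auto
  have "proj (red N (ia \<alpha>)) = proj (red N (ia \<gamma>))"
    using reduce[OF ia(1) deg_ia[OF a Na]] reduce[OF ia(2) deg_ia[OF b Nb]] e unfolding N_def by simp
  then have "red N (ia \<alpha>) \<ominus>\<^bsub>P\<^esub> red N (ia \<gamma>) \<in> I" using proj_eq[OF ra] by simp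
  then have "red N (ia \<alpha>) \<ominus>\<^bsub>P\<^esub> red N (ia \<gamma>) = \<zero>\<^bsub>P\<^esub>"
    by (rule ideal_small) (use ra coeff_red ia in \<open>simp add: a_minus_def\<close>)
  then have req: "red N (ia \<alpha>) = red N (ia \<gamma>)" using P.r_right_minus_eq[OF ra] by simp
  show ?thesis
  proof
    fix k
    define r where "r = k mod m"
    define q where "q = k div m"
    have r: "r < m" unfolding r_def using m1 by simp
    have k: "k = m*q+r" unfolding r_def q_def by simp
    have pe: "psi r N (ia \<alpha>) = psi r N (ia \<gamma>)"
      using arg_cong[OF req, of "\<lambda>p. up_ring.coeff P p r"] coeff_red ia r by simp
    have adm_r: "adm (\<lambda>i. \<delta> (m*i+r))" if d: "adm \<delta>" and Nd: "\<And>k. N \<le> k \<Longrightarrow> \<delta> k = 0" for \<delta>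
      unfolding adm_def
    proof
      show "\<forall>j. \<delta> (m * j + r) \<in> mu_plus n" using d unfolding adm_def by blast
      have "{j. \<delta> (m * j + r) \<noteq> 0} \<subseteq> {..<N}"
      proof
        fix j assume "j \<in> {j. \<delta> (m * j + r) \<noteq> 0}"
        then have "m*j+r < N" using Nd not_le by blast
        then show "j \<in> {..<N}" using mi_le[of j r] by simp
      qed
      then show "finite {j. \<delta> (m * j + r) \<noteq> 0}" using finite_subset by blast
    qed
    have "(\<lambda>i. \<alpha> (m*i+r)) = (\<lambda>i. \<gamma> (m*i+r))"
    proof (rule gen_uniq)
      show "psi r N (ia \<alpha>) \<in> carrier R" by (rule psi_closed[OF ia(1)])
      show "adm (\<lambda>i. \<alpha> (m*i+r))" by (rule adm_r[OF a Na])
      show "adm (\<lambda>i. \<gamma> (m*i+r))" by (rule adm_r[OF b Nb])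
      show "psi r N (ia \<alpha>) = (\<Oplus>j\<in>{j. \<alpha> (m*j+r) \<noteq> 0}. iota (\<alpha> (m*j+r)) \<otimes> x [^] j)"
        by (rule psi_ia[OF a Na])
      show "psi r N (ia \<alpha>) = (\<Oplus>j\<in>{j. \<gamma> (m*j+r) \<noteq> 0}. iota (\<gamma> (m*j+r)) \<otimes> x [^] j)"
        unfolding pe by (rule psi_ia[OF b Nb])
    qed
    then show "\<alpha> k = \<gamma> k" using k by metis
  qed
qed

lemma main: "S_generator Q n (\<lambda>z. proj (up_ring.monom P (iota z) 0)) (proj (up_ring.monom P \<one> 1))"
proof -
  interpret H: ring_hom_cring P Q proj by (rule hom)
  have cQ: "carrier Q = proj ` carrier P"
    unfolding Q_def proj_def FactRing_def A_RCOSETS_def' by auto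
  show ?thesis unfolding S_generator_def
  proof (intro conjI ballI)
    show "proj (up_ring.monom P \<one> 1) \<in> carrier Q" by (rule H.hom_closed) simp
    fix z assume "z \<in> carrier Q"
    then obtain p where p: "p \<in> carrier P" and zp: "z = proj p" using cQ by blast
    obtain \<alpha> where a: "adm \<alpha>" and pa: "proj p = proj (ia \<alpha>)" using exist[OF p] by blast
    show "\<exists>!\<alpha> :: nat \<Rightarrow> complex. (\<forall>j. \<alpha> j \<in> mu_plus n) \<and> finite {j. \<alpha> j \<noteq> 0} \<and>
          z = (\<Oplus>\<^bsub>Q\<^esub>j\<in>{j. \<alpha> j \<noteq> 0}. proj (up_ring.monom P (iota (\<alpha> j)) 0) \<otimes>\<^bsub>Q\<^esub> proj (up_ring.monom P \<one> 1) [^]\<^bsub>Q\<^esub> j)"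
    proof (rule ex1I)
      show "(\<forall>j. \<alpha> j \<in> mu_plus n) \<and> finite {j. \<alpha> j \<noteq> 0} \<and>
          z = (\<Oplus>\<^bsub>Q\<^esub>j\<in>{j. \<alpha> j \<noteq> 0}. proj (up_ring.monom P (iota (\<alpha> j)) 0) \<otimes>\<^bsub>Q\<^esub> proj (up_ring.monom P \<one> 1) [^]\<^bsub>Q\<^esub> j)"
        using a sum_Q[OF a] zp pa unfolding adm_def by simp
      fix \<gamma> :: "nat \<Rightarrow> complex" assume g: "(\<forall>j. \<gamma> j \<in> mu_plus n) \<and> finite {j. \<gamma> j \<noteq> 0} \<and>
          z = (\<Oplus>\<^bsub>Q\<^esub>j\<in>{j. \<gamma> j \<noteq> 0}. proj (up_ring.monom P (iota (\<gamma> j)) 0) \<otimes>\<^bsub>Q\<^esub> proj (up_ring.monom P \<one> 1) [^]\<^bsub>Q\<^esub> j)"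
      then have ag: "adm \<gamma>" unfolding adm_def by simp
      have "proj (ia \<gamma>) = proj (ia \<alpha>)" using g sum_Q[OF ag] zp pa by simp
      then show "\<gamma> = \<alpha>" by (rule uniq[OF ag a])
    qed
  qed
qed
end

theorem proposition5p4:
  fixes R :: "('a, 'b) ring_scheme" and n m :: nat and iota :: "complex \<Rightarrow> 'a" and x :: 'a
  assumes "n \<ge> 1"
    and "cring R"
    and "mu_embedding R n iota"
    and "S_generator R n iota x"
    and "m \<ge> 1"
  shows "S_generator (root_ext R m x) n (root_ext_map R m x \<circ> iota) (root_ext_Y R m x)"
proof -
  interpret rx R "UP R" n m iota x
    by (intro rx.intro UP_cring.intro rx_axioms.intro assms)
  have "S_generator Q n (\<lambda>z. proj (up_ring.monom (UP R) (iota z) 0)) (proj (up_ring.monom (UP R) \<one>\<^bsub>R\<^esub> 1))"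
    using main by simp
  then show ?thesis
    unfolding Q_def proj_def I_def f_def root_ext_def root_ext_map_def root_ext_Y_def root_ideal_def o_def
    by simp
qed

end
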